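(* Let $Q$ be a conjunctive query without self-joins and $A$ a universal attribute of $Q$. Then $Q$ contains a hard structure if and only if $Q_{-A}$ contains a hard structure, where $Q_{-A}$ is obtained by removing $A$ from every relation of $Q$ and from its head.
   Context: CQ $Q(\mathbf{A}) :- R_1(\mathbb{A}_1),\dots,R_p(\mathbb{A}_p)$ with distinct relation symbols, $\mathrm{attr}(R_i)=\mathbb{A}_i$, $\mathrm{attr}(Q)=\bigcup_i\mathbb{A}_i$, $\mathrm{head}(Q)=\mathbf{A}$. An attribute is universal if it is in $\mathrm{head}(Q)$ and in every $\mathbb{A}_i$. Standing assumption: distinct relations have distinct attribute sets. $R_j$ is exogenous if another relation $R_i$ has $\mathrm{attr}(R_i)\subsetneq\mathrm{attr}(R_j)$, endogenous otherwise. A path between relations $R_i,R_j$ using only attributes in a set $S$ is a sequence of relations from $R_i$ to $R_j$ in which consecutive relations share an attribute of $S$. Triad-like structure: three endogenous relations such that for each pair there is a path between them using only attributes in $\mathrm{attr}(Q)\setminus(\mathrm{head}(Q)\cup\mathrm{attr}(R))$, $R$ the third relation. $R_j$ is dominated by $R_i$ if (1) $\mathrm{attr}(R_i)\subseteq\mathrm{attr}(R_j)$; (2) for every $R_k$ with $\mathrm{attr}(R_i)\setminus\mathrm{attr}(R_k)\ne\emptyset$, $\mathrm{attr}(R_j)\cap\mathrm{attr}(R_k)\subseteq\mathrm{attr}(R_i)\cap\mathrm{head}(Q)$; (3) $\mathrm{attr}(R_i)\subseteq\mathrm{head}(Q)$ or $\mathrm{head}(Q)\subseteq\mathrm{attr}(R_i)$;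 non-dominated relations are those dominated by no other relation. Strand: two non-dominated relations $R_i,R_j$ with $\mathrm{head}(Q)\cap\mathrm{attr}(R_i)\ne\mathrm{head}(Q)\cap\mathrm{attr}(R_j)$ and $(\mathrm{attr}(R_i)\cap\mathrm{attr}(R_j))\setminus\mathrm{head}(Q)\ne\emptyset$. The head join of non-dominated relations is the full query formed by the non-dominated relations restricted to $\mathrm{head}(Q)$; a full query is hierarchical if for all attributes $A,B$ the sets of relations containing them are nested or disjoint. $Q$ contains a hard structure if it contains a triad-like structure or a strand, or the head join of its non-dominated relations is non-hierarchical. *)

theory Defs
  imports Main
begin

text \<open>A self-join-free conjunctive query is represented by a set I of relation
symbols, a map att giving each relation symbol its attribute set, and the
head attribute set H.  attr(Q) is the union of all attribute sets.\<close>

definition cq_wf :: "'r set \<Rightarrow> ('r \<Rightarrow> 'a set) \<Rightarrow> 'a set \<Rightarrow> bool" where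
  "cq_wf I att H \<longleftrightarrow> finite I \<and> I \<noteq> {} \<and> (\<forall>i\<in>I. finite (att i))
     \<and> inj_on att I \<and> H \<subseteq> (\<Union>i\<in>I. att i)"

definition attrQ :: "'r set \<Rightarrow> ('r \<Rightarrow> 'a set) \<Rightarrow> 'a set" where
  "attrQ I att = (\<Union>i\<in>I. att i)"

definition universal :: "'r set \<Rightarrow> ('r \<Rightarrow> 'a set) \<Rightarrow> 'a set \<Rightarrow> 'a \<Rightarrow> bool" where
  "universal I att H A \<longleftrightarrow> A \<in> H \<and> (\<forall>i\<in>I. A \<in> att i)"

definition exogenous :: "'r set \<Rightarrow> ('r \<Rightarrow> 'a set) \<Rightarrow> 'r \<Rightarrow> bool" where
  "exogenous I att j \<longleftrightarrow> (\<exists>i\<in>I. att i \<subset> att j)"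

definition endogenous :: "'r set \<Rightarrow> ('r \<Rightarrow> 'a set) \<Rightarrow> 'r \<Rightarrow> bool" where
  "endogenous I att j \<longleftrightarrow> j \<in> I \<and> \<not> exogenous I att j"

definition cq_path :: "'r set \<Rightarrow> ('r \<Rightarrow> 'a set) \<Rightarrow> 'a set \<Rightarrow> 'r \<Rightarrow> 'r \<Rightarrow> bool" where
  "cq_path I att S i j \<longleftrightarrow> (\<exists>xs. xs \<noteq> [] \<and> hd xs = i \<and> last xs = j \<and> set xs \<subseteq> I \<and>
      (\<forall>k. Suc k < length xs \<longrightarrow> att (xs ! k) \<inter> att (xs ! Suc k) \<inter> S \<noteq> {}))"

definition triad_like :: "'r set \<Rightarrow> ('r \<Rightarrow> 'a set) \<Rightarrow> 'a set \<Rightarrow> bool" where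
  "triad_like I att H \<longleftrightarrow> (\<exists>r1 r2 r3.
     r1 \<noteq> r2 \<and> r2 \<noteq> r3 \<and> r1 \<noteq> r3 \<and>
     endogenous I att r1 \<and> endogenous I att r2 \<and> endogenous I att r3 \<and>
     cq_path I att (attrQ I att - (H \<union> att r3)) r1 r2 \<and>
     cq_path I att (attrQ I att - (H \<union> att r1)) r2 r3 \<and>
     cq_path I att (attrQ I att - (H \<union> att r2)) r1 r3)"

definition dominated_by :: "'r set \<Rightarrow> ('r \<Rightarrow> 'a set) \<Rightarrow> 'a set \<Rightarrow> 'r \<Rightarrow> 'r \<Rightarrow> bool" where
  "dominated_by I att H j i \<longleftrightarrow> i \<in> I \<and> j \<in> I \<and> i \<noteq> j \<and>
     att i \<subseteq> att j \<and>
     (\<forall>k\<in>I. att i - att k \<noteq> {} \<longrightarrow> att j \<inter> att k \<subseteq> att i \<inter> H) \<and>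
     (att i \<subseteq> H \<or> H \<subseteq> att i)"

definition non_dominated :: "'r set \<Rightarrow> ('r \<Rightarrow> 'a set) \<Rightarrow> 'a set \<Rightarrow> 'r \<Rightarrow> bool" where
  "non_dominated I att H j \<longleftrightarrow> j \<in> I \<and> \<not> (\<exists>i\<in>I. dominated_by I att H j i)"

definition strand :: "'r set \<Rightarrow> ('r \<Rightarrow> 'a set) \<Rightarrow> 'a set \<Rightarrow> bool" where
  "strand I att H \<longleftrightarrow> (\<exists>i j. non_dominated I att H i \<and> non_dominated I att H j \<and>
     H \<inter> att i \<noteq> H \<inter> att j \<and> (att i \<inter> att j) - H \<noteq> {})"

definition hierarchical :: "'r set \<Rightarrow> ('r \<Rightarrow> 'a set) \<Rightarrow> bool" where
  "hierarchical J att \<longleftrightarrow> (\<forall>X Y.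
     let RX = {i\<in>J. X \<in> att i}; RY = {i\<in>J. Y \<in> att i}
     in RX \<subseteq> RY \<or> RY \<subseteq> RX \<or> RX \<inter> RY = {})"

definition head_join_hierarchical :: "'r set \<Rightarrow> ('r \<Rightarrow> 'a set) \<Rightarrow> 'a set \<Rightarrow> bool" where
  "head_join_hierarchical I att H \<longleftrightarrow>
     hierarchical {j. non_dominated I att H j} (\<lambda>j. att j \<inter> H)"

definition hard_structure :: "'r set \<Rightarrow> ('r \<Rightarrow> 'a set) \<Rightarrow> 'a set \<Rightarrow> bool" where
  "hard_structure I att H \<longleftrightarrow>
     triad_like I att H \<or> strand I att H \<or> \<not> head_join_hierarchical I att H"

definition remove_attr :: "('r \<Rightarrow> 'a set) \<Rightarrow> 'a \<Rightarrow> 'r \<Rightarrow> 'a set" where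
  "remove_attr att A = (\<lambda>i. att i - {A})"

end

theory Submission
  imports Defs
begin

lemma exo_eq:
  assumes U: "\<forall>i\<in>I. A \<in> att i" and j: "j \<in> I"
  shows "exogenous I (remove_attr att A) j \<longleftrightarrow> exogenous I att j"
  unfolding exogenous_def remove_attr_def using U j by blast

lemma endo_eq:
  assumes U: "\<forall>i\<in>I. A \<in> att i"
  shows "endogenous I (remove_attr att A) j \<longleftrightarrow> endogenous I att j"
  unfolding endogenous_def using exo_eq[OF U] by blast

lemma path_eq:
  assumes U: "\<forall>i\<in>I. A \<in> att i" and H: "A \<in> H" and r: "r \<in> I"
  shows "cq_path I (remove_attr att A) (attrQ I (remove_attr att A) - ((H - {A}) \<union> remove_attr att A r)) x y
     \<longleftrightarrow> cq_path I att (attrQ I att - (H \<union> att r)) x y"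
proof -
  have S: "attrQ I (remove_attr att A) - ((H - {A}) \<union> remove_attr att A r) = attrQ I att - (H \<union> att r)"
    unfolding attrQ_def remove_attr_def using H by auto
  have "\<And>u v S'. A \<notin> S' \<Longrightarrow> remove_attr att A u \<inter> remove_attr att A v \<inter> S' = att u \<inter> att v \<inter> S'"
    unfolding remove_attr_def by auto
  moreover have "A \<notin> attrQ I att - (H \<union> att r)" using H by auto
  ultimately show ?thesis unfolding S cq_path_def by simp
qed

lemma triad_eq:
  assumes U: "\<forall>i\<in>I. A \<in> att i" and H: "A \<in> H"
  shows "triad_like I (remove_attr att A) (H - {A}) \<longleftrightarrow> triad_like I att H"
proof
  assume "triad_like I (remove_attr att A) (H - {A})"
  then obtain r1 r2 r3 where h: "r1 \<noteq> r2 \<and> r2 \<noteq> r3 \<and> r1 \<noteq> r3 \<and>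
     endogenous I (remove_attr att A) r1 \<and> endogenous I (remove_attr att A) r2 \<and> endogenous I (remove_attr att A) r3 \<and>
     cq_path I (remove_attr att A) (attrQ I (remove_attr att A) - ((H - {A}) \<union> remove_attr att A r3)) r1 r2 \<and>
     cq_path I (remove_attr att A) (attrQ I (remove_attr att A) - ((H - {A}) \<union> remove_attr att A r1)) r2 r3 \<and>
     cq_path I (remove_attr att A) (attrQ I (remove_attr att A) - ((H - {A}) \<union> remove_attr att A r2)) r1 r3"
    unfolding triad_like_def by blast
  then have "r1 \<in> I" "r2 \<in> I" "r3 \<in> I" unfolding endogenous_def by auto
  show "triad_like I att H"
  proof -
    note p = path_eq[OF U H \<open>r1 \<in> I\<close>] path_eq[OF U H \<open>r2 \<in> I\<close>] path_eq[OF U H \<open>r3 \<in> I\<close>]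
    show ?thesis unfolding triad_like_def
      apply (rule exI[of _ r1], rule exI[of _ r2], rule exI[of _ r3])
      using h unfolding p endo_eq[OF U] by blast
  qed
next
  assume "triad_like I att H"
  then obtain r1 r2 r3 where h: "r1 \<noteq> r2 \<and> r2 \<noteq> r3 \<and> r1 \<noteq> r3 \<and>
     endogenous I att r1 \<and> endogenous I att r2 \<and> endogenous I att r3 \<and>
     cq_path I att (attrQ I att - (H \<union> att r3)) r1 r2 \<and>
     cq_path I att (attrQ I att - (H \<union> att r1)) r2 r3 \<and>
     cq_path I att (attrQ I att - (H \<union> att r2)) r1 r3"
    unfolding triad_like_def by blast
  then have "r1 \<in> I" "r2 \<in> I" "r3 \<in> I" unfolding endogenous_def by auto
  show "triad_like I (remove_attr att A) (H - {A})"
  proof -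
    note p = path_eq[OF U H \<open>r1 \<in> I\<close>] path_eq[OF U H \<open>r2 \<in> I\<close>] path_eq[OF U H \<open>r3 \<in> I\<close>]
    show ?thesis unfolding triad_like_def
      apply (rule exI[of _ r1], rule exI[of _ r2], rule exI[of _ r3])
      using h unfolding p endo_eq[OF U] by blast
  qed
qed

lemma dom_eq_in:
  assumes U: "\<forall>i\<in>I. A \<in> att i" and H: "A \<in> H" and True: "i \<in> I \<and> j \<in> I"
  shows "dominated_by I (remove_attr att A) (H - {A}) j i \<longleftrightarrow> dominated_by I att H j i"
proof -
  have ai: "A \<in> att i" and aj: "A \<in> att j" using U True by auto
  have k: "\<And>k. k \<in> I \<Longrightarrow> (att i - {A} - (att k - {A}) \<noteq> {} \<longrightarrow> (att j - {A}) \<inter> (att k - {A}) \<subseteq> (att i - {A}) \<inter> (H - {A}))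
     \<longleftrightarrow> (att i - att k \<noteq> {} \<longrightarrow> att j \<inter> att k \<subseteq> att i \<inter> H)"
  proof -
    fix k assume "k \<in> I"
    then have ak: "A \<in> att k" using U by auto
    have e1: "(att i - {A} - (att k - {A}) \<noteq> {}) = (att i - att k \<noteq> {})" using ak by blast
    have e2: "((att j - {A}) \<inter> (att k - {A}) \<subseteq> (att i - {A}) \<inter> (H - {A})) = (att j \<inter> att k \<subseteq> att i \<inter> H)"
      using ai aj ak H by blast
    show "?thesis k" by (simp only: e1 e2)
  qed
  have c1: "(att i - {A} \<subseteq> att j - {A}) \<longleftrightarrow> att i \<subseteq> att j" using ai aj by blast
  have c3: "(att i - {A} \<subseteq> H - {A} \<or> H - {A} \<subseteq> att i - {A}) \<longleftrightarrow> (att i \<subseteq> H \<or> H \<subseteq> att i)"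
    using ai H by blast
  have b: "(\<forall>k\<in>I. att i - {A} - (att k - {A}) \<noteq> {} \<longrightarrow> (att j - {A}) \<inter> (att k - {A}) \<subseteq> (att i - {A}) \<inter> (H - {A}))
     \<longleftrightarrow> (\<forall>k\<in>I. att i - att k \<noteq> {} \<longrightarrow> att j \<inter> att k \<subseteq> att i \<inter> H)"
    using k by (intro ball_cong) auto
  show ?thesis unfolding dominated_by_def remove_attr_def by (simp only: b c1 c3)
qed

lemma dom_eq:
  assumes U: "\<forall>i\<in>I. A \<in> att i" and H: "A \<in> H"
  shows "dominated_by I (remove_attr att A) (H - {A}) j i \<longleftrightarrow> dominated_by I att H j i"
proof (cases "i \<in> I \<and> j \<in> I")
  case True
  then show ?thesis using dom_eq_in[OF U H] by blast
next
  case False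
  then show ?thesis unfolding dominated_by_def by auto
qed

lemma nd_eq:
  assumes U: "\<forall>i\<in>I. A \<in> att i" and H: "A \<in> H"
  shows "non_dominated I (remove_attr att A) (H - {A}) j \<longleftrightarrow> non_dominated I att H j"
  unfolding non_dominated_def using dom_eq[OF U H] by simp

lemma strand_eq:
  assumes U: "\<forall>i\<in>I. A \<in> att i" and H: "A \<in> H"
  shows "strand I (remove_attr att A) (H - {A}) \<longleftrightarrow> strand I att H"
proof -
  have e: "\<And>i j. i \<in> I \<Longrightarrow> j \<in> I \<Longrightarrow>
    ((H - {A}) \<inter> remove_attr att A i \<noteq> (H - {A}) \<inter> remove_attr att A j \<and> (remove_attr att A i \<inter> remove_attr att A j) - (H - {A}) \<noteq> {})
    \<longleftrightarrow> (H \<inter> att i \<noteq> H \<inter> att j \<and> (att i \<inter> att j) - H \<noteq> {})"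
  proof -
    fix i j assume "i \<in> I" "j \<in> I"
    then have "A \<in> att i" "A \<in> att j" using U by auto
    then show "?thesis i j" using H unfolding remove_attr_def by blast
  qed
  have ndI: "\<And>i. non_dominated I att H i \<Longrightarrow> i \<in> I" unfolding non_dominated_def by auto
  show ?thesis
  proof
    assume "strand I (remove_attr att A) (H - {A})"
    then obtain i j where h: "non_dominated I att H i" "non_dominated I att H j"
      "(H - {A}) \<inter> remove_attr att A i \<noteq> (H - {A}) \<inter> remove_attr att A j \<and> (remove_attr att A i \<inter> remove_attr att A j) - (H - {A}) \<noteq> {}"
      unfolding strand_def nd_eq[OF U H] by blast
    have "H \<inter> att i \<noteq> H \<inter> att j \<and> (att i \<inter> att j) - H \<noteq> {}"
      using e[OF ndI[OF h(1)] ndI[OF h(2)]] h(3) by (rule iffD1)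
    then show "strand I att H" unfolding strand_def using h by blast
  next
    assume "strand I att H"
    then obtain i j where h: "non_dominated I att H i" "non_dominated I att H j"
      "H \<inter> att i \<noteq> H \<inter> att j \<and> (att i \<inter> att j) - H \<noteq> {}"
      unfolding strand_def by blast
    have "(H - {A}) \<inter> remove_attr att A i \<noteq> (H - {A}) \<inter> remove_attr att A j \<and> (remove_attr att A i \<inter> remove_attr att A j) - (H - {A}) \<noteq> {}"
      using e[OF ndI[OF h(1)] ndI[OF h(2)]] h(3) by (rule iffD2)
    then show "strand I (remove_attr att A) (H - {A})" unfolding strand_def nd_eq[OF U H] using h by blast
  qed
qed

definition nest :: "'x set \<Rightarrow> 'x set \<Rightarrow> bool" where
  "nest P Q \<longleftrightarrow> P \<subseteq> Q \<or> Q \<subseteq> P \<or> P \<inter> Q = {}"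

lemma hier_nest: "hierarchical J f \<longleftrightarrow> (\<forall>X Y. nest {i\<in>J. X \<in> f i} {i\<in>J. Y \<in> f i})"
  unfolding hierarchical_def nest_def Let_def ..

lemma hier_transfer:
  assumes R: "\<And>X. X \<noteq> A \<Longrightarrow> {i\<in>J. X \<in> f i} = {i\<in>J. X \<in> g i}"
    and F: "{i\<in>J. A \<in> f i} = J" and G: "{i\<in>J. A \<in> g i} = {}"
  shows "hierarchical J f \<longleftrightarrow> hierarchical J g"
proof -
  have n1: "\<And>S. S \<subseteq> J \<Longrightarrow> nest J S \<and> nest S J" unfolding nest_def by blast
  have n2: "\<And>S. nest {} S \<and> nest S {}" unfolding nest_def by blast
  have sf: "\<And>X. {i\<in>J. X \<in> f i} \<subseteq> J" by blast
  have key: "\<And>X Y. nest {i\<in>J. X \<in> f i} {i\<in>J. Y \<in> f i} \<longleftrightarrow> nest {i\<in>J. X \<in> g i} {i\<in>J. Y \<in> g i}"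
  proof -
    fix X Y
    show "?thesis X Y"
    proof (cases "X = A")
      case True
      then show ?thesis using F G n1 n2 sf by metis
    next
      case xa: False
      show ?thesis
      proof (cases "Y = A")
        case True
        then show ?thesis using F G n1 n2 sf by metis
      next
        case False
        then show ?thesis using R[OF xa] R[OF False] by simp
      qed
    qed
  qed
  show ?thesis unfolding hier_nest using key by blast
qed

lemma hj_eq:
  assumes U: "\<forall>i\<in>I. A \<in> att i" and H: "A \<in> H"
  shows "head_join_hierarchical I (remove_attr att A) (H - {A}) \<longleftrightarrow> head_join_hierarchical I att H"
proof -
  let ?J = "{j. non_dominated I att H j}"
  have J: "{j. non_dominated I (remove_attr att A) (H - {A}) j} = ?J" using nd_eq[OF U H] by simp
  have JI: "?J \<subseteq> I" unfolding non_dominated_def by auto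
  have R: "\<And>X. X \<noteq> A \<Longrightarrow> {i\<in>?J. X \<in> att i \<inter> H} = {i\<in>?J. X \<in> remove_attr att A i \<inter> (H - {A})}"
    unfolding remove_attr_def by auto
  have R0: "{i\<in>?J. A \<in> remove_attr att A i \<inter> (H - {A})} = {}"
    unfolding remove_attr_def by auto
  have R1: "{i\<in>?J. A \<in> att i \<inter> H} = ?J" using JI U H by auto
  have "hierarchical ?J (\<lambda>j. att j \<inter> H) \<longleftrightarrow> hierarchical ?J (\<lambda>j. remove_attr att A j \<inter> (H - {A}))"
    by (rule hier_transfer[of A, OF R R1 R0])
  then show ?thesis unfolding head_join_hierarchical_def J by simp
qed

theorem lemma8:
  fixes I :: "'r set" and att :: "'r \<Rightarrow> 'a set" and H :: "'a set" and A :: 'a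
  assumes "cq_wf I att H"
    and "universal I att H A"
  shows "hard_structure I att H \<longleftrightarrow> hard_structure I (remove_attr att A) (H - {A})"
proof -
  have U: "\<forall>i\<in>I. A \<in> att i" and H: "A \<in> H" using assms(2) unfolding universal_def by auto
  show ?thesis unfolding hard_structure_def triad_eq[OF U H] strand_eq[OF U H] hj_eq[OF U H] ..
qed

end
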